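(* Let $\{(G_n,\Psi_n,\varphi^L_n,\varphi^U_n)\}_{n\ge0}$ be an $\mathcal{F}$-system (with $\varphi^L_n<\varphi^U_n$ on $G_n$) satisfying Condition $\Gamma$, with induced Cantor system $(X,H_X)$ and associated fence $\mathbf{F}_\Phi$. Then there exists a continuous surjection $T:\mathbf{F}_\Phi\to\mathbf{F}_\Phi$, having $H_X$ as a factor, given by $T(x,t)=(H_X(x),s(x,t))$. Moreover, if the system additionally satisfies Condition $\Gamma^+$ and $H_X$ is a homeomorphism of $X$, then $T$ is a homeomorphism of $\mathbf{F}_\Phi$.
   Context: An $\mathcal{F}$-system consists of: finite directed graphs $G_n$ ($n\ge0$), each vertex having at least one outgoing and one incoming edge; surjective maps $\Psi_n:G_{n+1}\to G_n$ sending edges to edges; such that (i) for each $n$ and $v\in G_n$ there are $m>n$ and distinct $v',v''\in G_{m+1}$ with $\Psi_n\circ\cdots\circ\Psi_m(v')=\Psi_n\circ\cdots\circ\Psi_m(v'')=v$; (ii) for every $m$ there is $n>m$ such that for every $g\in G_n$ the set $\{\Psi_m\circ\cdots\circ\Psi_{n-1}(g'):\overrightarrow{gg'}\in G_n\}$ has exactly one element; and maps $\varphi^L_n,\varphi^U_n:G_n\to[0,1]$ with $\varphi^L_n\le\varphi^U_n$, $\varphi^U_{n+1}(v')\le\varphi^U_n(\Psi_n(v'))$, $\varphi^L_{n+1}(v')\ge\varphi^L_n(\Psi_n(v'))$, and such that for every $g\in G_n$ there is $g'\in G_{n+1}$ with $\Psi_n(g')=g$, $\varphi^L_{n+1}(g')=\varphi^L_n(g)$,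 $\varphi^U_{n+1}(g')=\varphi^U_n(g)$. $X=\{x\in\prod_n G_n: x(n)=\Psi_n(x(n+1))\ \forall n\}$; $H_X:X\to X$ is the continuous surjection whose graph is $\{(x,y)\in X^2:\overrightarrow{x(n)y(n)}\in G_n\ \forall n\}$. $\varphi^U(x)=\lim_n\varphi^U_n(x(n))$, $\varphi^L(x)=\lim_n\varphi^L_n(x(n))$, $\Phi=(\varphi^L,\varphi^U)$, $\mathbf{F}_\Phi=\{(x,t)\in X\times[0,1]:\varphi^L(x)\le t\le\varphi^U(x)\}$. "Having $H_X$ as a factor" means $\pi\circ T=H_X\circ\pi$ for $\pi(x,t)=x$. For $u,v\in G_n$ let $s_n(u,v)$ be the increasing affine map of $[\varphi^L_n(u),\varphi^U_n(u)]$ onto $[\varphi^L_n(v),\varphi^U_n(v)]$: $s_n(u,v)(t)=\frac{\varphi^U_n(v)-\varphi^L_n(v)}{\varphi^U_n(u)-\varphi^L_n(u)}(t-\varphi^L_n(u))+\varphi^L_n(v)$. For an edge $\overrightarrow{uv}\in G_n$: $\Gamma_n(\overrightarrow{uv})=\max\{|s_n(u,v)(t)-s_{n+1}(u',v')(t)| : \overrightarrow{u'v'}\in G_{n+1},\Psi_n(u')=u,\Psi_n(v')=v,\ t\in[\varphi^L_{n+1}(u'),\varphi^U_{n+1}(u')]\}$ and $\Gamma^+_n(\overrightarrow{uv})=\max\{|s_n(v,u)(t)-s_{n+1}(v',u')(t)| : \overrightarrow{u'v'}\in G_{n+1},\Psi_n(u')=u,\Psi_n(v')=v,\ t\in[\varphi^L_{n+1}(v'),\varphi^U_{n+1}(v')]\}$;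 $\Gamma_n=\max\Gamma_n(\overrightarrow{uv})$, $\Gamma^+_n=\max\Gamma^+_n(\overrightarrow{uv})$. Condition $\Gamma$: $\sum_n\Gamma_n<\infty$; Condition $\Gamma^+$: $\sum_n\Gamma^+_n<\infty$. Finally $s:\mathbf{F}_\Phi\to\mathbb{R}$, $s(x,t)=\lim_n s_n(x(n),H_X(x)(n))(t)$ (the limit exists uniformly under Condition $\Gamma$). *)

theory Defs
  imports "HOL-Analysis.Analysis"
begin

text \<open>An F-system is given by: vertex sets V n, edge sets E n (pairs of vertices),
 bonding maps Psi n (from level Suc n to level n), and maps phiL n, phiU n.
 All levels share one ambient vertex type 'a.\<close>

text \<open>psi_comp Psi n d maps level n+d to level n: it is Psi n o ... o Psi (n+d-1).\<close>
fun psi_comp :: "(nat \<Rightarrow> 'a \<Rightarrow> 'a) \<Rightarrow> nat \<Rightarrow> nat \<Rightarrow> 'a \<Rightarrow> 'a" where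
  "psi_comp Psi n 0 = id"
| "psi_comp Psi n (Suc d) = psi_comp Psi n d \<circ> Psi (n + d)"

definition F_system ::
  "(nat \<Rightarrow> 'a set) \<Rightarrow> (nat \<Rightarrow> ('a \<times> 'a) set) \<Rightarrow> (nat \<Rightarrow> 'a \<Rightarrow> 'a)
   \<Rightarrow> (nat \<Rightarrow> 'a \<Rightarrow> real) \<Rightarrow> (nat \<Rightarrow> 'a \<Rightarrow> real) \<Rightarrow> bool" where
  "F_system V E Psi phiL phiU \<longleftrightarrow>
     (\<forall>n. finite (V n) \<and> E n \<subseteq> V n \<times> V n)
   \<and> (\<forall>n. \<forall>v\<in>V n. (\<exists>w. (v, w) \<in> E n) \<and> (\<exists>w. (w, v) \<in> E n))
   \<and> (\<forall>n. Psi n ` V (Suc n) = V n)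
   \<and> (\<forall>n. (\<lambda>(u, v). (Psi n u, Psi n v)) ` E (Suc n) = E n)
   \<and> (\<forall>n. \<forall>v\<in>V n. \<exists>m>n. \<exists>v'\<in>V (Suc m). \<exists>v''\<in>V (Suc m). v' \<noteq> v'' \<and>
          psi_comp Psi n (Suc m - n) v' = v \<and> psi_comp Psi n (Suc m - n) v'' = v)
   \<and> (\<forall>m. \<exists>n>m. \<forall>g\<in>V n. card {psi_comp Psi m (n - m) g' | g'. (g, g') \<in> E n} = 1)
   \<and> (\<forall>n. \<forall>v\<in>V n. 0 \<le> phiL n v \<and> phiL n v \<le> phiU n v \<and> phiU n v \<le> 1)
   \<and> (\<forall>n. \<forall>v'\<in>V (Suc n). phiU (Suc n) v' \<le> phiU n (Psi n v')
                          \<and> phiL (Suc n) v' \<ge> phiL n (Psi n v'))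
   \<and> (\<forall>n. \<forall>g\<in>V n. \<exists>g'\<in>V (Suc n). Psi n g' = g \<and> phiL (Suc n) g' = phiL n g
                          \<and> phiU (Suc n) g' = phiU n g)"

definition cantor_X :: "(nat \<Rightarrow> 'a set) \<Rightarrow> (nat \<Rightarrow> 'a \<Rightarrow> 'a) \<Rightarrow> (nat \<Rightarrow> 'a) set" where
  "cantor_X V Psi = {x. \<forall>n. x n \<in> V n \<and> x n = Psi n (x (Suc n))}"

definition X_top :: "(nat \<Rightarrow> 'a set) \<Rightarrow> (nat \<Rightarrow> 'a \<Rightarrow> 'a) \<Rightarrow> (nat \<Rightarrow> 'a) topology" where
  "X_top V Psi = subtopology (product_topology (\<lambda>n. discrete_topology (V n)) UNIV) (cantor_X V Psi)"

definition H_X :: "(nat \<Rightarrow> 'a set) \<Rightarrow> (nat \<Rightarrow> ('a \<times> 'a) set) \<Rightarrow> (nat \<Rightarrow> 'a \<Rightarrow> 'a)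
                   \<Rightarrow> (nat \<Rightarrow> 'a) \<Rightarrow> (nat \<Rightarrow> 'a)" where
  "H_X V E Psi x = (THE y. y \<in> cantor_X V Psi \<and> (\<forall>n. (x n, y n) \<in> E n))"

definition phiU_lim :: "(nat \<Rightarrow> 'a \<Rightarrow> real) \<Rightarrow> (nat \<Rightarrow> 'a) \<Rightarrow> real" where
  "phiU_lim phiU x = lim (\<lambda>n. phiU n (x n))"

definition phiL_lim :: "(nat \<Rightarrow> 'a \<Rightarrow> real) \<Rightarrow> (nat \<Rightarrow> 'a) \<Rightarrow> real" where
  "phiL_lim phiL x = lim (\<lambda>n. phiL n (x n))"

definition fence :: "(nat \<Rightarrow> 'a set) \<Rightarrow> (nat \<Rightarrow> 'a \<Rightarrow> 'a) \<Rightarrow> (nat \<Rightarrow> 'a \<Rightarrow> real)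
                     \<Rightarrow> (nat \<Rightarrow> 'a \<Rightarrow> real) \<Rightarrow> ((nat \<Rightarrow> 'a) \<times> real) set" where
  "fence V Psi phiL phiU =
     {(x, t). x \<in> cantor_X V Psi \<and> phiL_lim phiL x \<le> t \<and> t \<le> phiU_lim phiU x}"

definition fence_top :: "(nat \<Rightarrow> 'a set) \<Rightarrow> (nat \<Rightarrow> 'a \<Rightarrow> 'a) \<Rightarrow> (nat \<Rightarrow> 'a \<Rightarrow> real)
                     \<Rightarrow> (nat \<Rightarrow> 'a \<Rightarrow> real) \<Rightarrow> ((nat \<Rightarrow> 'a) \<times> real) topology" where
  "fence_top V Psi phiL phiU =
     subtopology (prod_topology (X_top V Psi) euclideanreal) (fence V Psi phiL phiU)"

text \<open>s_n(u,v): increasing affine map of [phiL_n u, phiU_n u] onto [phiL_n v, phiU_n v].\<close>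
definition s_n :: "(nat \<Rightarrow> 'a \<Rightarrow> real) \<Rightarrow> (nat \<Rightarrow> 'a \<Rightarrow> real) \<Rightarrow> nat \<Rightarrow> 'a \<Rightarrow> 'a \<Rightarrow> real \<Rightarrow> real" where
  "s_n phiL phiU n u v t =
     (phiU n v - phiL n v) / (phiU n u - phiL n u) * (t - phiL n u) + phiL n v"

definition Gamma_edge :: "(nat \<Rightarrow> ('a \<times> 'a) set) \<Rightarrow> (nat \<Rightarrow> 'a \<Rightarrow> 'a)
     \<Rightarrow> (nat \<Rightarrow> 'a \<Rightarrow> real) \<Rightarrow> (nat \<Rightarrow> 'a \<Rightarrow> real) \<Rightarrow> nat \<Rightarrow> 'a \<times> 'a \<Rightarrow> real" where
  "Gamma_edge E Psi phiL phiU n e =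
     Sup {\<bar>s_n phiL phiU n (fst e) (snd e) t - s_n phiL phiU (Suc n) u' v' t\<bar> | u' v' t.
            (u', v') \<in> E (Suc n) \<and> Psi n u' = fst e \<and> Psi n v' = snd e
            \<and> phiL (Suc n) u' \<le> t \<and> t \<le> phiU (Suc n) u'}"

definition Gamma_plus_edge :: "(nat \<Rightarrow> ('a \<times> 'a) set) \<Rightarrow> (nat \<Rightarrow> 'a \<Rightarrow> 'a)
     \<Rightarrow> (nat \<Rightarrow> 'a \<Rightarrow> real) \<Rightarrow> (nat \<Rightarrow> 'a \<Rightarrow> real) \<Rightarrow> nat \<Rightarrow> 'a \<times> 'a \<Rightarrow> real" where
  "Gamma_plus_edge E Psi phiL phiU n e =
     Sup {\<bar>s_n phiL phiU n (snd e) (fst e) t - s_n phiL phiU (Suc n) v' u' t\<bar> | u' v' t.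
            (u', v') \<in> E (Suc n) \<and> Psi n u' = fst e \<and> Psi n v' = snd e
            \<and> phiL (Suc n) v' \<le> t \<and> t \<le> phiU (Suc n) v'}"

definition Gamma :: "(nat \<Rightarrow> ('a \<times> 'a) set) \<Rightarrow> (nat \<Rightarrow> 'a \<Rightarrow> 'a)
     \<Rightarrow> (nat \<Rightarrow> 'a \<Rightarrow> real) \<Rightarrow> (nat \<Rightarrow> 'a \<Rightarrow> real) \<Rightarrow> nat \<Rightarrow> real" where
  "Gamma E Psi phiL phiU n = Max (Gamma_edge E Psi phiL phiU n ` E n)"

definition Gamma_plus :: "(nat \<Rightarrow> ('a \<times> 'a) set) \<Rightarrow> (nat \<Rightarrow> 'a \<Rightarrow> 'a)
     \<Rightarrow> (nat \<Rightarrow> 'a \<Rightarrow> real) \<Rightarrow> (nat \<Rightarrow> 'a \<Rightarrow> real) \<Rightarrow> nat \<Rightarrow> real" where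
  "Gamma_plus E Psi phiL phiU n = Max (Gamma_plus_edge E Psi phiL phiU n ` E n)"

definition condition_Gamma where
  "condition_Gamma E Psi phiL phiU \<longleftrightarrow> summable (Gamma E Psi phiL phiU)"

definition condition_Gamma_plus where
  "condition_Gamma_plus E Psi phiL phiU \<longleftrightarrow> summable (Gamma_plus E Psi phiL phiU)"

definition s_lim :: "(nat \<Rightarrow> 'a set) \<Rightarrow> (nat \<Rightarrow> ('a \<times> 'a) set) \<Rightarrow> (nat \<Rightarrow> 'a \<Rightarrow> 'a)
     \<Rightarrow> (nat \<Rightarrow> 'a \<Rightarrow> real) \<Rightarrow> (nat \<Rightarrow> 'a \<Rightarrow> real) \<Rightarrow> (nat \<Rightarrow> 'a) \<Rightarrow> real \<Rightarrow> real" where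
  "s_lim V E Psi phiL phiU x t = lim (\<lambda>n. s_n phiL phiU n (x n) (H_X V E Psi x n) t)"

end

theory Submission
  imports Defs
begin

lemma psi_comp_Suc2: "psi_comp Psi n (Suc m) v = Psi n (psi_comp Psi (Suc n) m v)"
proof (induction m arbitrary: v)
  case 0 then show ?case by simp
next
  case (Suc m)
  have "psi_comp Psi n (Suc (Suc m)) v = psi_comp Psi n (Suc m) (Psi (n + Suc m) v)" by simp
  also have "\<dots> = Psi n (psi_comp Psi (Suc n) m (Psi (n + Suc m) v))" by (rule Suc.IH)
  also have "\<dots> = Psi n (psi_comp Psi (Suc n) (Suc m) v)" by simp
  finally show ?case .
qed

lemma chain_inter:
  assumes fin: "finite S" and sub: "\<And>m. A m \<subseteq> S" and ne: "\<And>m. A m \<noteq> {}"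
    and dec: "\<And>m. A (Suc m) \<subseteq> A m"
  shows "\<exists>a. \<forall>m. a \<in> A m"
proof (rule ccontr)
  assume "\<not> ?thesis"
  then have "\<forall>a. \<exists>m. a \<notin> A m" by blast
  then obtain f where f: "\<And>a. a \<notin> A (f a)" by metis
  have ds: "decseq A" using dec by (simp add: decseq_Suc_iff)
  define M where "M = Max (f ` S)"
  obtain a where a: "a \<in> A M" using ne by blast
  then have "a \<in> S" using sub by blast
  then have "f a \<le> M" unfolding M_def using fin by simp
  then have "A M \<subseteq> A (f a)" using ds by (simp add: decseq_def)
  then show False using a f by blast
qed

locale fsys =
  fixes V :: "nat \<Rightarrow> 'a set" and E :: "nat \<Rightarrow> ('a \<times> 'a) set"
    and Psi :: "nat \<Rightarrow> 'a \<Rightarrow> 'a" and phiL phiU :: "nat \<Rightarrow> 'a \<Rightarrow> real"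
  assumes sys: "F_system V E Psi phiL phiU"
    and strict: "\<And>n v. v \<in> V n \<Longrightarrow> phiL n v < phiU n v"
begin

abbreviation "X \<equiv> cantor_X V Psi"
abbreviation "H \<equiv> H_X V E Psi"

lemma sysC1: "(\<forall>n. finite (V n) \<and> E n \<subseteq> V n \<times> V n)"
  by (insert sys, unfold F_system_def, elim conjE, assumption)
lemma sysC2: "(\<forall>n. \<forall>v\<in>V n. (\<exists>w. (v, w) \<in> E n) \<and> (\<exists>w. (w, v) \<in> E n))"
  by (insert sys, unfold F_system_def, elim conjE, assumption)
lemma sysC3: "(\<forall>n. Psi n ` V (Suc n) = V n)"
  by (insert sys, unfold F_system_def, elim conjE, assumption)
lemma sysC4: "(\<forall>n. (\<lambda>(u, v). (Psi n u, Psi n v)) ` E (Suc n) = E n)"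
  by (insert sys, unfold F_system_def, elim conjE, assumption)
lemma sysC5: "(\<forall>m. \<exists>n>m. \<forall>g\<in>V n. card {psi_comp Psi m (n - m) g' | g'. (g, g') \<in> E n} = 1)"
  by (insert sys, unfold F_system_def, elim conjE, assumption)
lemma sysC6: "(\<forall>n. \<forall>v\<in>V n. 0 \<le> phiL n v \<and> phiL n v \<le> phiU n v \<and> phiU n v \<le> 1)"
  by (insert sys, unfold F_system_def, elim conjE, assumption)
lemma sysC7: "(\<forall>n. \<forall>v'\<in>V (Suc n). phiU (Suc n) v' \<le> phiU n (Psi n v')
                          \<and> phiL (Suc n) v' \<ge> phiL n (Psi n v'))"
  by (insert sys, unfold F_system_def, elim conjE, assumption)
lemmas sysC = sysC1 sysC2 sysC3 sysC4 sysC5 sysC6 sysC7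

lemma finV: "finite (V n)" using sysC(1) by blast
lemma EV: "E n \<subseteq> V n \<times> V n" using sysC(1) by blast
lemma finE: "finite (E n)" using EV finV by (meson finite_SigmaI finite_subset)
lemma out_edge: "v \<in> V n \<Longrightarrow> \<exists>w. (v, w) \<in> E n" using sysC(2) by blast
lemma in_edge: "v \<in> V n \<Longrightarrow> \<exists>w. (w, v) \<in> E n" using sysC(2) by blast
lemma PsiV: "Psi n ` V (Suc n) = V n" using sysC(3) by blast
lemma PsiE: "(\<lambda>(u, v). (Psi n u, Psi n v)) ` E (Suc n) = E n" using sysC(4) by blast
lemma cond2: "\<exists>n>m. \<forall>g\<in>V n. card {psi_comp Psi m (n - m) g' | g'. (g, g') \<in> E n} = 1"
  using sysC(5) by (rule spec)
lemma phi_bds: "v \<in> V n \<Longrightarrow> 0 \<le> phiL n v \<and> phiL n v \<le> phiU n v \<and> phiU n v \<le> 1"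
  using sysC(6) by blast
lemma phi_mono: "v' \<in> V (Suc n) \<Longrightarrow> phiU (Suc n) v' \<le> phiU n (Psi n v') \<and> phiL (Suc n) v' \<ge> phiL n (Psi n v')"
  using sysC(7) by blast

lemma edge_Psi: "(u, v) \<in> E (Suc n) \<Longrightarrow> (Psi n u, Psi n v) \<in> E n"
proof -
  assume "(u, v) \<in> E (Suc n)"
  then have "(\<lambda>(u, v). (Psi n u, Psi n v)) (u, v) \<in> (\<lambda>(u, v). (Psi n u, Psi n v)) ` E (Suc n)" by (rule imageI)
  then show ?thesis using PsiE[of n] by simp
qed

lemma edge_lift: "(u, v) \<in> E n \<Longrightarrow> \<exists>u' v'. (u', v') \<in> E (Suc n) \<and> Psi n u' = u \<and> Psi n v' = v"
proof -
  assume "(u, v) \<in> E n"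
  then have "(u, v) \<in> (\<lambda>(u, v). (Psi n u, Psi n v)) ` E (Suc n)" using PsiE[of n] by simp
  then obtain p where "p \<in> E (Suc n)" "(u, v) = (\<lambda>(u, v). (Psi n u, Psi n v)) p" by (rule imageE)
  then show ?thesis by (cases p) auto
qed

lemma Psi_in: "v \<in> V (Suc n) \<Longrightarrow> Psi n v \<in> V n" using PsiV by blast

lemma psi_V: "v \<in> V (n + m) \<Longrightarrow> psi_comp Psi n m v \<in> V n"
proof (induction m arbitrary: v)
  case 0 then show ?case by simp
next
  case (Suc m)
  have "Psi (n + m) v \<in> V (n + m)" using Psi_in[of v "n+m"] Suc.prems by simp
  then have "psi_comp Psi n m (Psi (n + m) v) \<in> V n" by (rule Suc.IH)
  then show ?case by simp
qed

lemma X_psi: "x \<in> X \<Longrightarrow> psi_comp Psi n m (x (n + m)) = x n"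
proof (induction m)
  case 0 then show ?case by simp
next
  case (Suc m)
  have "x (n + m) = Psi (n + m) (x (Suc (n + m)))" using Suc.prems unfolding cantor_X_def mem_Collect_eq by blast
  then have "psi_comp Psi n (Suc m) (x (n + Suc m)) = psi_comp Psi n m (x (n + m))" by simp
  then show ?case using Suc.IH Suc.prems by simp
qed

lemma XV: "x \<in> X \<Longrightarrow> x n \<in> V n" unfolding cantor_X_def mem_Collect_eq by blast
lemma XPsi: "x \<in> X \<Longrightarrow> Psi n (x (Suc n)) = x n" unfolding cantor_X_def mem_Collect_eq by metis

lemma koenig:
  assumes BV: "\<And>n. B n \<subseteq> V n" and Bne: "\<And>n. B n \<noteq> {}"
    and BPsi: "\<And>n. Psi n ` B (Suc n) \<subseteq> B n"
  shows "\<exists>x\<in>X. \<forall>n. x n \<in> B n"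
proof -
  define D where "D n = {d. \<forall>m. d \<in> psi_comp Psi n m ` B (n + m)}" for n
  have psiB: "psi_comp Psi n m ` B (n + m) \<subseteq> V n" for n m
    using BV psi_V by blast
  have dec: "psi_comp Psi n (Suc m) ` B (n + Suc m) \<subseteq> psi_comp Psi n m ` B (n + m)" for n m
  proof -
    have "psi_comp Psi n (Suc m) ` B (n + Suc m) = psi_comp Psi n m ` Psi (n + m) ` B (Suc (n + m))"
      by (simp add: image_comp)
    also have "\<dots> \<subseteq> psi_comp Psi n m ` B (n + m)" using BPsi by blast
    finally show ?thesis .
  qed
  have Dne: "D n \<noteq> {}" for n
  proof -
    have "\<exists>a. \<forall>m. a \<in> psi_comp Psi n m ` B (n + m)"
      by (rule chain_inter[OF finV[of n] psiB]) (use Bne dec in auto)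
    then show ?thesis unfolding D_def by blast
  qed
  have DB: "D n \<subseteq> B n" for n
    unfolding D_def by (force dest: spec[of _ 0])
  have lift: "\<exists>d'\<in>D (Suc n). Psi n d' = d" if d: "d \<in> D n" for n d
  proof -
    define A where "A m = {d' \<in> psi_comp Psi (Suc n) m ` B (Suc n + m). Psi n d' = d}" for m
    have "\<exists>a. \<forall>m. a \<in> A m"
    proof (rule chain_inter[OF finV[of "Suc n"]])
      show "A m \<subseteq> V (Suc n)" for m using psiB[of "Suc n" m] unfolding A_def by blast
      show "A m \<noteq> {}" for m
      proof -
        have "d \<in> psi_comp Psi n (Suc m) ` B (n + Suc m)" using d unfolding D_def by blast
        then obtain b where b: "b \<in> B (n + Suc m)" "d = psi_comp Psi n (Suc m) b" by blast
        have "d = Psi n (psi_comp Psi (Suc n) m b)" using b(2) psi_comp_Suc2 by metis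
        moreover have "b \<in> B (Suc n + m)" using b(1) by simp
        ultimately have "psi_comp Psi (Suc n) m b \<in> A m" unfolding A_def by blast
        then show ?thesis by blast
      qed
      show "A (Suc m) \<subseteq> A m" for m using dec[of "Suc n" m] unfolding A_def by auto
    qed
    then obtain a where "\<forall>m. a \<in> A m" by blast
    then show ?thesis unfolding A_def D_def by auto
  qed
  have "\<forall>n d. \<exists>d'. d \<in> D n \<longrightarrow> d' \<in> D (Suc n) \<and> Psi n d' = d" using lift by blast
  then obtain f where f: "\<And>n d. d \<in> D n \<Longrightarrow> f n d \<in> D (Suc n) \<and> Psi n (f n d) = d" by metis
  obtain d0 where d0: "d0 \<in> D 0" using Dne by blast
  define x where "x = rec_nat d0 f"
  have x0: "x 0 = d0" and xS: "x (Suc n) = f n (x n)" for n by (simp_all add: x_def)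
  have xD: "x n \<in> D n" for n by (induction n) (use d0 f in \<open>auto simp: x0 xS\<close>)
  have "x \<in> X" unfolding cantor_X_def mem_Collect_eq
  proof
    fix n
    have "x n \<in> V n" using xD DB BV by blast
    moreover have "x n = Psi n (x (Suc n))" using f[OF xD[of n]] xS[of n] by simp
    ultimately show "x n \<in> V n \<and> x n = Psi n (x (Suc n))" ..
  qed
  then show ?thesis using xD DB by blast
qed


lemma H_unique:
  assumes x: "x \<in> X" and y: "y \<in> X" and y': "y' \<in> X"
    and ey: "\<And>n. (x n, y n) \<in> E n" and ey': "\<And>n. (x n, y' n) \<in> E n"
  shows "y = y'"
proof
  fix m
  obtain n where nc: "n > m \<and> (\<forall>g\<in>V n. card {psi_comp Psi m (n - m) g' | g'. (g, g') \<in> E n} = 1)"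
    using cond2[of m] ..
  note nm = conjunct1[OF nc] and c = conjunct2[OF nc]
  define S where "S = {psi_comp Psi m (n - m) g' | g'. (x n, g') \<in> E n}"
  have "card S = 1" unfolding S_def by (rule bspec[OF c XV[OF x]])
  then obtain a where Sa: "S = {a}" by (rule card_1_singletonE)
  have nn: "m + (n - m) = n" using nm by simp
  have "y m = psi_comp Psi m (n - m) (y n)" using X_psi[OF y, of m "n - m"] nn by simp
  then have m1: "y m \<in> S" unfolding S_def using ey[of n] by blast
  have "y' m = psi_comp Psi m (n - m) (y' n)" using X_psi[OF y', of m "n - m"] nn by simp
  then have "y' m \<in> S" unfolding S_def using ey'[of n] by blast
  then show "y m = y' m" using m1 Sa by simp
qed

lemma H_prop:
  assumes x: "x \<in> X"
  shows "H x \<in> X \<and> (\<forall>n. (x n, H x n) \<in> E n)"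
proof -
  have "\<exists>y\<in>X. \<forall>n. y n \<in> {w. (x n, w) \<in> E n}"
  proof (rule koenig)
    show "{w. (x n, w) \<in> E n} \<subseteq> V n" for n using EV by blast
    show "{w. (x n, w) \<in> E n} \<noteq> {}" for n using out_edge[OF XV[OF x]] by blast
    show "Psi n ` {w. (x (Suc n), w) \<in> E (Suc n)} \<subseteq> {w. (x n, w) \<in> E n}" for n
      using edge_Psi[of "x (Suc n)" _ n] XPsi[OF x, of n] by auto
  qed
  then obtain y where y: "y \<in> X" "\<And>n. (x n, y n) \<in> E n" by blast
  have "H x = y" unfolding H_X_def
  proof (rule the_equality)
    show "y \<in> X \<and> (\<forall>n. (x n, y n) \<in> E n)" using y by blast
    show "z = y" if "z \<in> X \<and> (\<forall>n. (x n, z n) \<in> E n)" for z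
      using H_unique[OF x _ y(1)] that y(2) by blast
  qed
  then show ?thesis using y by simp
qed

lemma H_X: "x \<in> X \<Longrightarrow> H x \<in> X" using H_prop by blast
lemma H_E: "x \<in> X \<Longrightarrow> (x n, H x n) \<in> E n" using H_prop by blast

lemma H_surj:
  assumes y: "y \<in> X" shows "\<exists>x\<in>X. H x = y"
proof -
  have "\<exists>x\<in>X. \<forall>n. x n \<in> {w. (w, y n) \<in> E n}"
  proof (rule koenig)
    show "{w. (w, y n) \<in> E n} \<subseteq> V n" for n using EV by blast
    show "{w. (w, y n) \<in> E n} \<noteq> {}" for n using in_edge[OF XV[OF y]] by blast
    show "Psi n ` {w. (w, y (Suc n)) \<in> E (Suc n)} \<subseteq> {w. (w, y n) \<in> E n}" for n
      using edge_Psi[of _ "y (Suc n)" n] XPsi[OF y, of n] by auto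
  qed
  then obtain x where x: "x \<in> X" "\<And>n. (x n, y n) \<in> E n" by blast
  have "H x = y" using H_unique[OF x(1) H_X[OF x(1)] y] H_E[OF x(1)] x(2) by blast
  then show ?thesis using x by blast
qed

lemma H_local: "\<exists>n>m. \<forall>x\<in>X. \<forall>x'\<in>X. x n = x' n \<longrightarrow> H x m = H x' m"
proof -
  obtain n where nc: "n > m \<and> (\<forall>g\<in>V n. card {psi_comp Psi m (n - m) g' | g'. (g, g') \<in> E n} = 1)"
    using cond2[of m] ..
  note nm = conjunct1[OF nc] and c = conjunct2[OF nc]
  have nn: "m + (n - m) = n" using nm by simp
  have "H x m = H x' m" if x: "x \<in> X" and x': "x' \<in> X" and e: "x n = x' n" for x x'
  proof -
    define S where "S = {psi_comp Psi m (n - m) g' | g'. (x n, g') \<in> E n}"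
    have "card S = 1" unfolding S_def by (rule bspec[OF c XV[OF x]])
    then obtain a where Sa: "S = {a}" by (rule card_1_singletonE)
    have "H x m = psi_comp Psi m (n - m) (H x n)" using X_psi[OF H_X[OF x], of m "n - m"] nn by simp
    then have m1: "H x m \<in> S" unfolding S_def using H_E[OF x, of n] by blast
    have "H x' m = psi_comp Psi m (n - m) (H x' n)" using X_psi[OF H_X[OF x'], of m "n - m"] nn by simp
    then have "H x' m \<in> S" unfolding S_def using H_E[OF x', of n] e by auto
    then show ?thesis using m1 Sa by simp
  qed
  then show ?thesis using nm by blast
qed

lemma L_inc: assumes x: "x \<in> X" shows "incseq (\<lambda>n. phiL n (x n))"
proof (rule incseq_SucI)
  fix n
  have "phiL (Suc n) (x (Suc n)) \<ge> phiL n (Psi n (x (Suc n)))" using phi_mono XV[OF x] by blast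
  then show "phiL n (x n) \<le> phiL (Suc n) (x (Suc n))" using XPsi[OF x] by simp
qed
lemma U_dec: assumes x: "x \<in> X" shows "decseq (\<lambda>n. phiU n (x n))"
proof (rule decseq_SucI)
  fix n
  have "phiU (Suc n) (x (Suc n)) \<le> phiU n (Psi n (x (Suc n)))" using phi_mono XV[OF x] by blast
  then show "phiU (Suc n) (x (Suc n)) \<le> phiU n (x n)" using XPsi[OF x] by simp
qed

lemma L_lim: assumes x: "x \<in> X" shows "(\<lambda>n. phiL n (x n)) \<longlonglongrightarrow> phiL_lim phiL x"
proof -
  have "(\<lambda>n. phiL n (x n)) \<longlonglongrightarrow> (SUP n. phiL n (x n))"
    by (rule LIMSEQ_incseq_SUP[OF _ L_inc[OF x]]) (meson bdd_aboveI2 phi_bds XV x order_trans)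
  then show ?thesis unfolding phiL_lim_def by (metis limI)
qed

lemma U_lim: assumes x: "x \<in> X" shows "(\<lambda>n. phiU n (x n)) \<longlonglongrightarrow> phiU_lim phiU x"
proof -
  have "(\<lambda>n. phiU n (x n)) \<longlonglongrightarrow> (INF n. phiU n (x n))"
    by (rule LIMSEQ_decseq_INF[OF _ U_dec[OF x]]) (meson bdd_belowI2 phi_bds XV x order_trans)
  then show ?thesis unfolding phiU_lim_def by (metis limI)
qed

lemma L_le: "x \<in> X \<Longrightarrow> phiL n (x n) \<le> phiL_lim phiL x"
  using incseq_le[OF L_inc L_lim] by blast
lemma U_ge: "x \<in> X \<Longrightarrow> phiU_lim phiU x \<le> phiU n (x n)"
  using decseq_ge[OF U_dec U_lim] by blast
lemma LU: "x \<in> X \<Longrightarrow> phiL_lim phiL x \<le> phiU_lim phiU x"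
  by (rule LIMSEQ_le[OF L_lim U_lim]) (use phi_bds XV in auto)

lemma fence_iff: "(x, t) \<in> fence V Psi phiL phiU \<longleftrightarrow> x \<in> X \<and> (\<forall>n. phiL n (x n) \<le> t \<and> t \<le> phiU n (x n))"
proof
  assume "(x, t) \<in> fence V Psi phiL phiU"
  then have x: "x \<in> X" and "phiL_lim phiL x \<le> t" "t \<le> phiU_lim phiU x" by (auto simp: fence_def)
  then show "x \<in> X \<and> (\<forall>n. phiL n (x n) \<le> t \<and> t \<le> phiU n (x n))"
    using L_le[OF x] U_ge[OF x] by (meson order_trans)
next
  assume a: "x \<in> X \<and> (\<forall>n. phiL n (x n) \<le> t \<and> t \<le> phiU n (x n))"
  then have "phiL_lim phiL x \<le> t" by (intro LIMSEQ_le_const2[OF L_lim]) auto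
  moreover have "t \<le> phiU_lim phiU x" using a by (intro LIMSEQ_le_const[OF U_lim]) auto
  ultimately show "(x, t) \<in> fence V Psi phiL phiU" using a by (simp add: fence_def)
qed

lemma affine_range:
  fixes a b c d t :: real
  assumes ab: "a < b" and cd: "c \<le> d" and t: "a \<le> t" "t \<le> b"
  shows "c \<le> (d - c) / (b - a) * (t - a) + c \<and> (d - c) / (b - a) * (t - a) + c \<le> d"
proof -
  define q where "q = (t - a) / (b - a)"
  have q0: "0 \<le> q" unfolding q_def using ab t by (intro divide_nonneg_nonneg) auto
  have q1: "q \<le> 1" unfolding q_def using ab t by (subst divide_le_eq_1) auto
  have e: "(d - c) / (b - a) * (t - a) = (d - c) * q" unfolding q_def by simp
  have "0 \<le> (d - c) * q" using q0 cd by simp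
  moreover have "(d - c) * q \<le> (d - c) * 1" using q1 cd by (intro mult_left_mono) auto
  ultimately show ?thesis unfolding e by simp
qed

lemma s_in:
  assumes u: "u \<in> V n" and v: "v \<in> V n" and t: "phiL n u \<le> t" "t \<le> phiU n u"
  shows "phiL n v \<le> s_n phiL phiU n u v t \<and> s_n phiL phiU n u v t \<le> phiU n v"
proof -
  have 1: "phiL n u < phiU n u" by (rule strict[OF u])
  have 2: "phiL n v \<le> phiU n v" using phi_bds[OF v] by blast
  show ?thesis unfolding s_n_def by (rule affine_range[OF 1 2 t])
qed

lemma s_left: "s_n phiL phiU n u v (phiL n u) = phiL n v"
  by (simp add: s_n_def)
lemma s_right: assumes u: "u \<in> V n" shows "s_n phiL phiU n u v (phiU n u) = phiU n v"
proof -
  have "phiU n u - phiL n u \<noteq> 0" using strict[OF u] by simp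
  then show ?thesis by (simp add: s_n_def)
qed

lemma s01:
  assumes "u \<in> V n" "v \<in> V n" "phiL n u \<le> t" "t \<le> phiU n u"
  shows "0 \<le> s_n phiL phiU n u v t \<and> s_n phiL phiU n u v t \<le> 1"
  using s_in[OF assms] phi_bds[OF assms(2)] by linarith

lemma Gamma_bound:
  assumes e: "(u, v) \<in> E n" and e': "(u', v') \<in> E (Suc n)" and pu: "Psi n u' = u" and pv: "Psi n v' = v"
    and t: "phiL (Suc n) u' \<le> t" "t \<le> phiU (Suc n) u'"
  shows "\<bar>s_n phiL phiU n u v t - s_n phiL phiU (Suc n) u' v' t\<bar> \<le> Gamma E Psi phiL phiU n"
proof -
  define S where "S = {\<bar>s_n phiL phiU n (fst (u,v)) (snd (u,v)) t - s_n phiL phiU (Suc n) u' v' t\<bar> | u' v' t.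
            (u', v') \<in> E (Suc n) \<and> Psi n u' = fst (u,v) \<and> Psi n v' = snd (u,v)
            \<and> phiL (Suc n) u' \<le> t \<and> t \<le> phiU (Suc n) u'}"
  have mem: "\<bar>s_n phiL phiU n u v t - s_n phiL phiU (Suc n) u' v' t\<bar> \<in> S"
    unfolding S_def apply (simp only: mem_Collect_eq)
    apply (rule exI[of _ u'], rule exI[of _ v'], rule exI[of _ t]) using e' pu pv t by simp
  have "z \<le> 1" if "z \<in> S" for z
  proof -
    from that obtain a b r where ab: "(a, b) \<in> E (Suc n)" "Psi n a = u" "Psi n b = v"
      "phiL (Suc n) a \<le> r" "r \<le> phiU (Suc n) a"
      and z: "z = \<bar>s_n phiL phiU n u v r - s_n phiL phiU (Suc n) a b r\<bar>" unfolding S_def by auto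
    have aV: "a \<in> V (Suc n)" and bV: "b \<in> V (Suc n)" using ab(1) EV by auto
    have uV: "u \<in> V n" and vV: "v \<in> V n" using e EV by auto
    have "phiL n u \<le> r" "r \<le> phiU n u" using phi_mono[OF aV] ab by auto
    then have 1: "0 \<le> s_n phiL phiU n u v r \<and> s_n phiL phiU n u v r \<le> 1" using s01 uV vV by blast
    have 2: "0 \<le> s_n phiL phiU (Suc n) a b r \<and> s_n phiL phiU (Suc n) a b r \<le> 1"
      using s01 aV bV ab by blast
    show ?thesis using 1 2 z by linarith
  qed
  then have "bdd_above S" by (meson bdd_aboveI)
  then have "\<bar>s_n phiL phiU n u v t - s_n phiL phiU (Suc n) u' v' t\<bar> \<le> Gamma_edge E Psi phiL phiU n (u, v)"
    using cSup_upper[OF mem] unfolding Gamma_edge_def S_def by simp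
  also have "\<dots> \<le> Gamma E Psi phiL phiU n" unfolding Gamma_def using finE e by simp
  finally show ?thesis .
qed

lemma Gamma_plus_bound:
  assumes e: "(u, v) \<in> E n" and e': "(u', v') \<in> E (Suc n)" and pu: "Psi n u' = u" and pv: "Psi n v' = v"
    and t: "phiL (Suc n) v' \<le> t" "t \<le> phiU (Suc n) v'"
  shows "\<bar>s_n phiL phiU n v u t - s_n phiL phiU (Suc n) v' u' t\<bar> \<le> Gamma_plus E Psi phiL phiU n"
proof -
  define S where "S = {\<bar>s_n phiL phiU n (snd (u,v)) (fst (u,v)) t - s_n phiL phiU (Suc n) v' u' t\<bar> | u' v' t.
            (u', v') \<in> E (Suc n) \<and> Psi n u' = fst (u,v) \<and> Psi n v' = snd (u,v)
            \<and> phiL (Suc n) v' \<le> t \<and> t \<le> phiU (Suc n) v'}"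
  have mem: "\<bar>s_n phiL phiU n v u t - s_n phiL phiU (Suc n) v' u' t\<bar> \<in> S"
    unfolding S_def apply (simp only: mem_Collect_eq)
    apply (rule exI[of _ u'], rule exI[of _ v'], rule exI[of _ t]) using e' pu pv t by simp
  have "z \<le> 1" if "z \<in> S" for z
  proof -
    from that obtain a b r where ab: "(a, b) \<in> E (Suc n)" "Psi n a = u" "Psi n b = v"
      "phiL (Suc n) b \<le> r" "r \<le> phiU (Suc n) b"
      and z: "z = \<bar>s_n phiL phiU n v u r - s_n phiL phiU (Suc n) b a r\<bar>" unfolding S_def by auto
    have aV: "a \<in> V (Suc n)" and bV: "b \<in> V (Suc n)" using ab(1) EV by auto
    have uV: "u \<in> V n" and vV: "v \<in> V n" using e EV by auto
    have "phiL n v \<le> r" "r \<le> phiU n v" using phi_mono[OF bV] ab by auto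
    then have 1: "0 \<le> s_n phiL phiU n v u r \<and> s_n phiL phiU n v u r \<le> 1" using s01 uV vV by blast
    have 2: "0 \<le> s_n phiL phiU (Suc n) b a r \<and> s_n phiL phiU (Suc n) b a r \<le> 1"
      using s01 aV bV ab by blast
    show ?thesis using 1 2 z by linarith
  qed
  then have "bdd_above S" by (meson bdd_aboveI)
  then have "\<bar>s_n phiL phiU n v u t - s_n phiL phiU (Suc n) v' u' t\<bar> \<le> Gamma_plus_edge E Psi phiL phiU n (u, v)"
    using cSup_upper[OF mem] unfolding Gamma_plus_edge_def S_def by simp
  also have "\<dots> \<le> Gamma_plus E Psi phiL phiU n" unfolding Gamma_plus_def using finE e by simp
  finally show ?thesis .
qed

end

lemma telescope:
  fixes f :: "nat \<Rightarrow> real \<Rightarrow> real" and lo hi g :: "nat \<Rightarrow> real"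
  assumes lo: "\<And>n. lo n \<le> lo (Suc n)" and hi: "\<And>n. hi (Suc n) \<le> hi n"
    and step: "\<And>n t. lo (Suc n) \<le> t \<Longrightarrow> t \<le> hi (Suc n) \<Longrightarrow> \<bar>f n t - f (Suc n) t\<bar> \<le> g n"
  shows "k \<le> m \<Longrightarrow> lo m \<le> t \<Longrightarrow> t \<le> hi m \<Longrightarrow> \<bar>f k t - f m t\<bar> \<le> sum g {k..<m}"
proof (induction m)
  case 0 then show ?case by simp
next
  case (Suc m)
  show ?case
  proof (cases "k = Suc m")
    case True then show ?thesis by simp
  next
    case False
    then have km: "k \<le> m" using Suc.prems by simp
    have "lo m \<le> t" using lo[of m] Suc.prems by linarith
    moreover have "t \<le> hi m" using hi[of m] Suc.prems by linarith
    ultimately have 1: "\<bar>f k t - f m t\<bar> \<le> sum g {k..<m}" using Suc.IH km by blast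
    have 2: "\<bar>f m t - f (Suc m) t\<bar> \<le> g m" using step Suc.prems by blast
    have "sum g {k..<Suc m} = sum g {k..<m} + g m" using km by simp
    then show ?thesis using 1 2 by linarith
  qed
qed

lemma aff_inv:
  fixes a b c d t :: real
  assumes "b - a \<noteq> 0" "d - c \<noteq> 0"
  shows "(b - a) / (d - c) * ((d - c) / (b - a) * (t - a) + c - c) + a = t"
proof -
  have "(b - a) / (d - c) * ((d - c) / (b - a)) = 1" using assms by simp
  then have "(b - a) / (d - c) * ((d - c) / (b - a) * (t - a)) = t - a" by (metis mult.assoc mult_1)
  then show ?thesis by simp
qed

lemma tail_le:
  fixes g :: "nat \<Rightarrow> real"
  assumes g: "summable g" and nn: "\<And>n. 0 \<le> g n" and km: "k \<le> m"
  shows "sum g {k..<m} \<le> (\<Sum>j. g (j + k))"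
proof -
  have "sum g {k..<m} = sum (\<lambda>j. g (j + k)) {0..<m - k}"
    using sum.shift_bounds_nat_ivl[of g 0 k "m - k"] km by simp
  also have "\<dots> \<le> (\<Sum>j. g (j + k))"
    by (rule sum_le_suminf) (use g nn in \<open>auto simp: summable_iff_shift\<close>)
  finally show ?thesis .
qed

lemma tail_lim:
  fixes g :: "nat \<Rightarrow> real"
  assumes g: "summable g"
  shows "(\<lambda>k. \<Sum>j. g (j + k)) \<longlonglongrightarrow> 0"
  by (rule suminf_exist_split2[OF g])

lemma tail_nonneg:
  fixes g :: "nat \<Rightarrow> real"
  assumes g: "summable g" and nn: "\<And>n. 0 \<le> g n"
  shows "0 \<le> (\<Sum>j. g (j + k))"
  by (rule suminf_nonneg) (use g nn in \<open>auto simp: summable_iff_shift\<close>)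

locale fsysG = fsys +
  assumes gam: "condition_Gamma E Psi phiL phiU"
begin

abbreviation "Gm \<equiv> Gamma E Psi phiL phiU"
abbreviation "sl \<equiv> s_lim V E Psi phiL phiU"
definition "R k = (\<Sum>j. Gm (j + k))"
definition "sa k x t = s_n phiL phiU k (x k) (H x k) t"

lemma Gm_summable: "summable Gm" using gam unfolding condition_Gamma_def .

lemma Gm_nonneg:
  assumes x: "x \<in> X" shows "0 \<le> Gm n"
proof -
  have xs: "x (Suc n) \<in> V (Suc n)" using XV[OF x] .
  have "\<bar>s_n phiL phiU n (x n) (H x n) (phiL (Suc n) (x (Suc n)))
         - s_n phiL phiU (Suc n) (x (Suc n)) (H x (Suc n)) (phiL (Suc n) (x (Suc n)))\<bar> \<le> Gm n"
    by (rule Gamma_bound[OF H_E[OF x] H_E[OF x] XPsi[OF x] XPsi[OF H_X[OF x]]])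
       (use phi_bds[OF xs] in auto)
  then show ?thesis by linarith
qed

lemma R_lim: "R \<longlonglongrightarrow> 0" unfolding R_def by (rule tail_lim[OF Gm_summable])

lemma R_nonneg: "x \<in> X \<Longrightarrow> 0 \<le> R k"
  unfolding R_def by (rule tail_nonneg[OF Gm_summable Gm_nonneg])

lemma sa_tele:
  assumes x: "x \<in> X" and km: "k \<le> m" and t: "phiL m (x m) \<le> t" "t \<le> phiU m (x m)"
  shows "\<bar>sa k x t - sa m x t\<bar> \<le> R k"
proof -
  have "\<bar>sa k x t - sa m x t\<bar> \<le> sum Gm {k..<m}"
  proof (rule telescope[where lo = "\<lambda>n. phiL n (x n)" and hi = "\<lambda>n. phiU n (x n)", OF _ _ _ km t])
    show "phiL n (x n) \<le> phiL (Suc n) (x (Suc n))" for n using L_inc[OF x] by (simp add: incseq_Suc_iff)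
    show "phiU (Suc n) (x (Suc n)) \<le> phiU n (x n)" for n using U_dec[OF x] by (simp add: decseq_Suc_iff)
    show "\<bar>sa n x t - sa (Suc n) x t\<bar> \<le> Gm n"
      if "phiL (Suc n) (x (Suc n)) \<le> t" "t \<le> phiU (Suc n) (x (Suc n))" for n t
      unfolding sa_def
      by (rule Gamma_bound[OF H_E[OF x] H_E[OF x] XPsi[OF x] XPsi[OF H_X[OF x]] that])
  qed
  also have "\<dots> \<le> R k" unfolding R_def by (rule tail_le[OF Gm_summable Gm_nonneg[OF x] km])
  finally show ?thesis .
qed

lemma sa_conv:
  assumes p: "(x, t) \<in> fence V Psi phiL phiU"
  shows "(\<lambda>k. sa k x t) \<longlonglongrightarrow> sl x t" and "\<bar>sa k x t - sl x t\<bar> \<le> R k"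
proof -
  have x: "x \<in> X" and tt: "\<And>n. phiL n (x n) \<le> t \<and> t \<le> phiU n (x n)" using p fence_iff by auto
  have tel: "\<bar>sa k x t - sa m x t\<bar> \<le> R k" if "k \<le> m" for k m
    using sa_tele[OF x that] tt by blast
  have "Cauchy (\<lambda>k. sa k x t)"
    unfolding Cauchy_iff
  proof (intro allI impI)
    fix e :: real assume e: "e > 0"
    have "eventually (\<lambda>k. R k < e / 2) sequentially"
      using R_lim e by (intro order_tendstoD(2)) auto
    then obtain M where M: "R M < e / 2" by (meson eventually_sequentially order_refl)
    show "\<exists>M. \<forall>m\<ge>M. \<forall>n\<ge>M. norm (sa m x t - sa n x t) < e"
    proof (intro exI allI impI)
      fix m n assume "M \<le> m" "M \<le> n"
      then have "\<bar>sa M x t - sa m x t\<bar> \<le> R M" "\<bar>sa M x t - sa n x t\<bar> \<le> R M" using tel by auto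
      then show "norm (sa m x t - sa n x t) < e" using M by simp
    qed
  qed
  then have "convergent (\<lambda>k. sa k x t)" by (simp add: Cauchy_convergent_iff)
  then show lim: "(\<lambda>k. sa k x t) \<longlonglongrightarrow> sl x t"
    unfolding s_lim_def sa_def by (simp add: convergent_LIMSEQ_iff)
  have "(\<lambda>m. \<bar>sa k x t - sa m x t\<bar>) \<longlonglongrightarrow> \<bar>sa k x t - sl x t\<bar>"
    by (intro tendsto_intros lim)
  then show "\<bar>sa k x t - sl x t\<bar> \<le> R k"
    by (rule LIMSEQ_le_const2) (use tel in auto)
qed

lemma sl_eq: "sl x t = lim (\<lambda>k. sa k x t)" unfolding s_lim_def sa_def ..

lemma sa_range:
  assumes x: "x \<in> X" and nm: "n \<le> m" and t: "phiL m (x m) \<le> t" "t \<le> phiU m (x m)"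
  shows "phiL n (H x n) \<le> sa m x t \<and> sa m x t \<le> phiU n (H x n)"
proof -
  have "phiL m (H x m) \<le> sa m x t \<and> sa m x t \<le> phiU m (H x m)"
    unfolding sa_def by (rule s_in[OF XV[OF x] XV[OF H_X[OF x]] t])
  moreover have "phiL n (H x n) \<le> phiL m (H x m)" using L_inc[OF H_X[OF x]] nm by (simp add: incseq_def)
  moreover have "phiU m (H x m) \<le> phiU n (H x n)" using U_dec[OF H_X[OF x]] nm by (simp add: decseq_def)
  ultimately show ?thesis by linarith
qed

lemma T_in:
  assumes p: "(x, t) \<in> fence V Psi phiL phiU"
  shows "(H x, sl x t) \<in> fence V Psi phiL phiU"
proof -
  have x: "x \<in> X" and tt: "\<And>n. phiL n (x n) \<le> t \<and> t \<le> phiU n (x n)" using p fence_iff by auto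
  have "phiL n (H x n) \<le> sl x t \<and> sl x t \<le> phiU n (H x n)" for n
  proof
    show "phiL n (H x n) \<le> sl x t"
      by (rule LIMSEQ_le_const[OF sa_conv(1)[OF p]]) (use sa_range[OF x] tt in blast)
    show "sl x t \<le> phiU n (H x n)"
      by (rule LIMSEQ_le_const2[OF sa_conv(1)[OF p]]) (use sa_range[OF x] tt in blast)
  qed
  then show ?thesis using fence_iff H_X[OF x] by blast
qed


lemma sa_affine: "sa k x t = (phiU k (H x k) - phiL k (H x k)) / (phiU k (x k) - phiL k (x k)) * (t - phiL k (x k)) + phiL k (H x k)"
  unfolding sa_def s_n_def ..

lemma sa_tendsto: "f \<longlonglongrightarrow> l \<Longrightarrow> (\<lambda>m. sa k x (f m)) \<longlonglongrightarrow> sa k x l"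
  unfolding sa_affine by (intro tendsto_intros)

lemma fence_L: "x \<in> X \<Longrightarrow> (x, phiL_lim phiL x) \<in> fence V Psi phiL phiU"
  unfolding fence_def using LU by auto
lemma fence_U: "x \<in> X \<Longrightarrow> (x, phiU_lim phiU x) \<in> fence V Psi phiL phiU"
  unfolding fence_def using LU by auto

lemma sl_left:
  assumes x: "x \<in> X"
  shows "sl x (phiL_lim phiL x) = phiL_lim phiL (H x)"
proof -
  define Lx where "Lx = phiL_lim phiL x"
  have bnd: "\<bar>sa k x Lx - phiL_lim phiL (H x)\<bar> \<le> R k" for k
  proof -
    have lim: "(\<lambda>m. \<bar>sa k x (phiL m (x m)) - phiL m (H x m)\<bar>) \<longlonglongrightarrow> \<bar>sa k x Lx - phiL_lim phiL (H x)\<bar>"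
      unfolding Lx_def by (intro tendsto_intros sa_tendsto L_lim x H_X)
    have le: "\<bar>sa k x (phiL m (x m)) - phiL m (H x m)\<bar> \<le> R k" if "m \<ge> k" for m
    proof -
      have "sa m x (phiL m (x m)) = phiL m (H x m)" unfolding sa_def by (rule s_left)
      moreover have "\<bar>sa k x (phiL m (x m)) - sa m x (phiL m (x m))\<bar> \<le> R k"
        by (rule sa_tele[OF x that]) (use phi_bds[OF XV[OF x]] in auto)
      ultimately show ?thesis by simp
    qed
    show ?thesis by (rule LIMSEQ_le_const2[OF lim]) (use le in auto)
  qed
  have "(\<lambda>k. sa k x Lx - phiL_lim phiL (H x)) \<longlonglongrightarrow> 0"
    by (rule Lim_null_comparison[OF _ R_lim]) (use bnd in auto)
  then have "(\<lambda>k. sa k x Lx) \<longlonglongrightarrow> phiL_lim phiL (H x)"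
    by (simp add: LIM_zero_iff)
  moreover have "(\<lambda>k. sa k x Lx) \<longlonglongrightarrow> sl x Lx" unfolding Lx_def by (rule sa_conv(1)[OF fence_L[OF x]])
  ultimately show ?thesis unfolding Lx_def using LIMSEQ_unique by blast
qed

lemma sl_right:
  assumes x: "x \<in> X"
  shows "sl x (phiU_lim phiU x) = phiU_lim phiU (H x)"
proof -
  define Ux where "Ux = phiU_lim phiU x"
  have bnd: "\<bar>sa k x Ux - phiU_lim phiU (H x)\<bar> \<le> R k" for k
  proof -
    have lim: "(\<lambda>m. \<bar>sa k x (phiU m (x m)) - phiU m (H x m)\<bar>) \<longlonglongrightarrow> \<bar>sa k x Ux - phiU_lim phiU (H x)\<bar>"
      unfolding Ux_def by (intro tendsto_intros sa_tendsto U_lim x H_X)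
    have le: "\<bar>sa k x (phiU m (x m)) - phiU m (H x m)\<bar> \<le> R k" if "m \<ge> k" for m
    proof -
      have "sa m x (phiU m (x m)) = phiU m (H x m)" unfolding sa_def by (rule s_right[OF XV[OF x]])
      moreover have "\<bar>sa k x (phiU m (x m)) - sa m x (phiU m (x m))\<bar> \<le> R k"
        by (rule sa_tele[OF x that]) (use phi_bds[OF XV[OF x]] in auto)
      ultimately show ?thesis by simp
    qed
    show ?thesis by (rule LIMSEQ_le_const2[OF lim]) (use le in auto)
  qed
  have "(\<lambda>k. sa k x Ux - phiU_lim phiU (H x)) \<longlonglongrightarrow> 0"
    by (rule Lim_null_comparison[OF _ R_lim]) (use bnd in auto)
  then have "(\<lambda>k. sa k x Ux) \<longlonglongrightarrow> phiU_lim phiU (H x)"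
    by (simp add: LIM_zero_iff)
  moreover have "(\<lambda>k. sa k x Ux) \<longlonglongrightarrow> sl x Ux" unfolding Ux_def by (rule sa_conv(1)[OF fence_U[OF x]])
  ultimately show ?thesis unfolding Ux_def using LIMSEQ_unique by blast
qed

lemma sl_cont:
  assumes x: "x \<in> X"
  shows "continuous_on {phiL_lim phiL x .. phiU_lim phiU x} (sl x)"
proof (rule uniform_limit_theorem)
  show "\<forall>\<^sub>F k in sequentially. continuous_on {phiL_lim phiL x .. phiU_lim phiU x} (sa k x)"
    unfolding sa_affine by (intro always_eventually allI continuous_intros)
  show "uniform_limit {phiL_lim phiL x .. phiU_lim phiU x} (\<lambda>k. sa k x) (sl x) sequentially"
  proof (rule uniform_limitI)
    fix e :: real assume e: "e > 0"
    have "eventually (\<lambda>k. R k < e) sequentially"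
      using R_lim e by (intro order_tendstoD(2)) auto
    then show "\<forall>\<^sub>F k in sequentially. \<forall>t\<in>{phiL_lim phiL x .. phiU_lim phiU x}. dist (sa k x t) (sl x t) < e"
    proof (rule eventually_mono)
      fix k assume k: "R k < e"
      show "\<forall>t\<in>{phiL_lim phiL x .. phiU_lim phiU x}. dist (sa k x t) (sl x t) < e"
      proof
        fix t assume "t \<in> {phiL_lim phiL x .. phiU_lim phiU x}"
        then have "(x, t) \<in> fence V Psi phiL phiU" unfolding fence_def using x by auto
        then show "dist (sa k x t) (sl x t) < e" using sa_conv(2) k by (simp add: dist_real_def) (meson le_less_trans)
      qed
    qed
  qed
  show "\<not> trivial_limit sequentially" by simp
qed

lemma T_surj:
  assumes p: "(y, t') \<in> fence V Psi phiL phiU"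
  shows "\<exists>x t. (x, t) \<in> fence V Psi phiL phiU \<and> H x = y \<and> sl x t = t'"
proof -
  have y: "y \<in> X" and t': "phiL_lim phiL y \<le> t'" "t' \<le> phiU_lim phiU y" using p unfolding fence_def by auto
  obtain x where x: "x \<in> X" "H x = y" using H_surj[OF y] by blast
  have "\<exists>t. phiL_lim phiL x \<le> t \<and> t \<le> phiU_lim phiU x \<and> sl x t = t'"
    by (rule IVT'[OF _ _ LU[OF x(1)] sl_cont[OF x(1)]]) (use sl_left[OF x(1)] sl_right[OF x(1)] x t' in auto)
  then obtain t where t: "phiL_lim phiL x \<le> t" "t \<le> phiU_lim phiU x" "sl x t = t'" by blast
  then have "(x, t) \<in> fence V Psi phiL phiU" unfolding fence_def using x by auto
  then show ?thesis using x t by blast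
qed


lemma topX: "topspace (X_top V Psi) = X"
  unfolding X_top_def using XV by (auto simp: PiE_def extensional_def)

lemma proj_cont: "continuous_map (X_top V Psi) (discrete_topology (V n)) (\<lambda>x. x n)"
  unfolding X_top_def
  using continuous_map_product_projection[of n UNIV "\<lambda>n. discrete_topology (V n)"]
  by (simp add: continuous_map_from_subtopology)

lemma cyl_cont:
  assumes g: "\<And>x. x \<in> X \<Longrightarrow> g (x n) \<in> topspace Y"
  shows "continuous_map (X_top V Psi) Y (\<lambda>x. g (x n))"
proof -
  define W where "W = (\<lambda>x. x n) ` X"
  have 1: "continuous_map (X_top V Psi) (subtopology (discrete_topology (V n)) W) (\<lambda>x. x n)"
    by (rule continuous_map_into_subtopology[OF proj_cont]) (simp add: topX W_def)
  have 2: "continuous_map (subtopology (discrete_topology (V n)) W) Y g"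
    using g unfolding W_def by auto
  show ?thesis using continuous_map_compose[OF 1 2] by (simp add: o_def)
qed

lemma cyl_open: "w \<in> V n \<Longrightarrow> openin (X_top V Psi) {x \<in> X. x n = w}"
  using openin_continuous_map_preimage[OF proj_cont[of n], of "{w}"] by (simp add: topX)

lemma H_cont: "continuous_map (X_top V Psi) (X_top V Psi) H"
proof -
  have comp: "continuous_map (X_top V Psi) (discrete_topology (V k)) (\<lambda>x. H x k)" for k
  proof -
    obtain n where nc: "n > k \<and> (\<forall>x\<in>X. \<forall>x'\<in>X. x n = x' n \<longrightarrow> H x k = H x' k)"
      using H_local[of k] ..
    define h where "h g = H (SOME x. x \<in> X \<and> x n = g) k" for g
    have hx: "h (x n) = H x k" if x: "x \<in> X" for x
    proof -
      have "\<exists>z. z \<in> X \<and> z n = x n" using x by blast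
      then have "(SOME z. z \<in> X \<and> z n = x n) \<in> X \<and> (SOME z. z \<in> X \<and> z n = x n) n = x n"
        by (rule someI_ex)
      then show ?thesis unfolding h_def using nc x by metis
    qed
    have "continuous_map (X_top V Psi) (discrete_topology (V k)) (\<lambda>x. h (x n))"
      by (rule cyl_cont) (simp add: hx XV H_X)
    then show ?thesis by (rule continuous_map_eq) (simp add: hx topX)
  qed
  have "continuous_map (X_top V Psi) (product_topology (\<lambda>n. discrete_topology (V n)) UNIV) H"
    using comp by (simp add: continuous_map_componentwise_UNIV)
  then show ?thesis unfolding X_top_def[of V Psi, symmetric]
    by (subst (2) X_top_def, intro continuous_map_into_subtopology) (use H_X topX in auto)
qed

lemma top_fence: "topspace (fence_top V Psi phiL phiU) = fence V Psi phiL phiU"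
  unfolding fence_top_def by (auto simp: topX fence_def)

lemma cont_real_eps:
  assumes "\<And>p e. p \<in> topspace Z \<Longrightarrow> e > 0 \<Longrightarrow> \<exists>U. openin Z U \<and> p \<in> U \<and> (\<forall>q\<in>U. \<bar>f q - f p\<bar> < e)"
  shows "continuous_map Z euclideanreal f"
proof -
  have "continuous_map Z Met_TC.mtopology f"
    unfolding Met_TC.continuous_map_to_metric mball_eq_ball
    using assms by (simp add: dist_real_def abs_minus_commute)
  then show ?thesis by simp
qed

lemma sl_contT: "continuous_map (fence_top V Psi phiL phiU) euclideanreal (\<lambda>p. sl (fst p) (snd p))"
proof (rule cont_real_eps)
  fix p and e :: real
  assume p: "p \<in> topspace (fence_top V Psi phiL phiU)" and e: "e > 0"
  obtain x t where pxt: "p = (x, t)" by (cases p)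
  have pf: "(x, t) \<in> fence V Psi phiL phiU" using p top_fence pxt by simp
  then have x: "x \<in> X" using fence_iff by blast
  have "eventually (\<lambda>k. R k < e / 3) sequentially"
    using R_lim e by (intro order_tendstoD(2)) auto
  then obtain k where k: "R k < e / 3" by (meson eventually_sequentially order_refl)
  obtain n where nc: "n > k \<and> (\<forall>x\<in>X. \<forall>x'\<in>X. x n = x' n \<longrightarrow> H x k = H x' k)"
    using H_local[of k] ..
  define c where "c = (phiU k (H x k) - phiL k (H x k)) / (phiU k (x k) - phiL k (x k))"
  define \<delta> where "\<delta> = e / (3 * (\<bar>c\<bar> + 1))"
  have \<delta>: "\<delta> > 0" unfolding \<delta>_def using e by (simp add: add_pos_nonneg)
  define U where "U = ({x' \<in> X. x' n = x n} \<times> ball t \<delta>) \<inter> fence V Psi phiL phiU"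
  have "openin (prod_topology (X_top V Psi) euclideanreal) ({x' \<in> X. x' n = x n} \<times> ball t \<delta>)"
    unfolding openin_prod_Times_iff using cyl_open[OF XV[OF x]] by simp
  then have "openin (fence_top V Psi phiL phiU) U"
    unfolding fence_top_def U_def openin_subtopology by blast
  moreover have "p \<in> U" unfolding U_def using pxt pf x \<delta> by simp
  moreover have "\<bar>sl (fst q) (snd q) - sl (fst p) (snd p)\<bar> < e" if q: "q \<in> U" for q
  proof -
    obtain x' t' where qxt: "q = (x', t')" by (cases q)
    have qf: "(x', t') \<in> fence V Psi phiL phiU" and x': "x' \<in> X" and xn: "x' n = x n"
      and tt: "dist t t' < \<delta>" using q unfolding U_def qxt by auto
    have nn: "k + (n - k) = n" using nc by simp
    have xk: "x' k = x k" using X_psi[OF x', of k "n - k"] X_psi[OF x, of k "n - k"] nn xn by simp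
    have hk: "H x' k = H x k" using nc x x' xn by metis
    have ca: "sa k z s = c * (s - phiL k (x k)) + phiL k (H x k)" if "z k = x k" "H z k = H x k" for z s
      unfolding sa_affine c_def using that by simp
    have "sa k x' t' - sa k x t = c * (t' - t)"
      using ca[OF xk hk, of t'] ca[of x t] by (simp add: algebra_simps)
    then have "\<bar>sa k x' t' - sa k x t\<bar> = \<bar>c\<bar> * \<bar>t' - t\<bar>" by (simp add: abs_mult)
    also have "\<dots> \<le> \<bar>c\<bar> * \<delta>" using tt by (intro mult_left_mono) (auto simp: dist_real_def)
    also have "\<dots> \<le> e / 3"
    proof -
      have "\<bar>c\<bar> * \<delta> = e / 3 * (\<bar>c\<bar> / (\<bar>c\<bar> + 1))" unfolding \<delta>_def by (simp add: field_simps)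
      also have "\<dots> \<le> e / 3 * 1" using e by (intro mult_left_mono) auto
      finally show ?thesis by simp
    qed
    finally have 1: "\<bar>sa k x' t' - sa k x t\<bar> \<le> e / 3" .
    have 2: "\<bar>sa k x' t' - sl x' t'\<bar> \<le> R k" by (rule sa_conv(2)[OF qf])
    have 3: "\<bar>sa k x t - sl x t\<bar> \<le> R k" by (rule sa_conv(2)[OF pf])
    have "\<bar>sl x' t' - sl x t\<bar> < e" using 1 2 3 k by linarith
    then show ?thesis unfolding pxt qxt by simp
  qed
  ultimately show "\<exists>U. openin (fence_top V Psi phiL phiU) U \<and> p \<in> U \<and>
      (\<forall>q\<in>U. \<bar>sl (fst q) (snd q) - sl (fst p) (snd p)\<bar> < e)" by blast
qed

lemma T_cont: "continuous_map (fence_top V Psi phiL phiU) (fence_top V Psi phiL phiU) (\<lambda>(x, t). (H x, sl x t))"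
proof -
  have f: "continuous_map (fence_top V Psi phiL phiU) (X_top V Psi) (\<lambda>p. H (fst p))"
    using continuous_map_compose[OF continuous_map_from_subtopology[OF continuous_map_fst] H_cont]
    unfolding fence_top_def by (simp add: o_def)
  have "continuous_map (fence_top V Psi phiL phiU) (prod_topology (X_top V Psi) euclideanreal)
          (\<lambda>p. (H (fst p), sl (fst p) (snd p)))"
    using f sl_contT by (simp add: continuous_map_paired)
  then have "continuous_map (fence_top V Psi phiL phiU) (fence_top V Psi phiL phiU)
          (\<lambda>p. (H (fst p), sl (fst p) (snd p)))"
    unfolding fence_top_def[of V Psi phiL phiU] 
    by (intro continuous_map_into_subtopology) (auto simp: top_fence[unfolded fence_top_def] intro: T_in)
  then show ?thesis by (simp add: case_prod_beta')
qed


lemma closedX: "closedin (product_topology (\<lambda>n. discrete_topology (V n)) UNIV) X"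
proof -
  define P where "P = product_topology (\<lambda>n. discrete_topology (V n)) UNIV"
  have proj: "continuous_map P (discrete_topology (V n)) (\<lambda>x. x n)" for n
    unfolding P_def using continuous_map_product_projection[of n UNIV "\<lambda>n. discrete_topology (V n)"] by simp
  define C where "C n = {x \<in> topspace P. x n = Psi n (x (Suc n))}" for n
  have tP: "x \<in> topspace P \<Longrightarrow> x i \<in> V i" for x i unfolding P_def by (simp add: PiE_iff)
  have Ceq: "C n = (\<Union>g\<in>V (Suc n). {x \<in> topspace P. x (Suc n) \<in> {g}} \<inter> {x \<in> topspace P. x n \<in> {Psi n g}})" for n
  proof
    show "C n \<subseteq> (\<Union>g\<in>V (Suc n). {x \<in> topspace P. x (Suc n) \<in> {g}} \<inter> {x \<in> topspace P. x n \<in> {Psi n g}})"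
    proof
      fix x assume "x \<in> C n"
      then have x: "x \<in> topspace P" "x n = Psi n (x (Suc n))" unfolding C_def by blast+
      then have "x (Suc n) \<in> V (Suc n)" using tP by blast
      then show "x \<in> (\<Union>g\<in>V (Suc n). {x \<in> topspace P. x (Suc n) \<in> {g}} \<inter> {x \<in> topspace P. x n \<in> {Psi n g}})"
        using x by blast
    qed
    show "(\<Union>g\<in>V (Suc n). {x \<in> topspace P. x (Suc n) \<in> {g}} \<inter> {x \<in> topspace P. x n \<in> {Psi n g}}) \<subseteq> C n"
      unfolding C_def by blast
  qed
  have "closedin P (C n)" for n
    unfolding Ceq
  proof (rule closedin_Union)
    show "finite ((\<lambda>g. {x \<in> topspace P. x (Suc n) \<in> {g}} \<inter> {x \<in> topspace P. x n \<in> {Psi n g}}) ` V (Suc n))"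
      using finV by simp
    fix T assume "T \<in> (\<lambda>g. {x \<in> topspace P. x (Suc n) \<in> {g}} \<inter> {x \<in> topspace P. x n \<in> {Psi n g}}) ` V (Suc n)"
    then obtain g where g: "g \<in> V (Suc n)" and T: "T = {x \<in> topspace P. x (Suc n) \<in> {g}} \<inter> {x \<in> topspace P. x n \<in> {Psi n g}}" by blast
    show "closedin P T" unfolding T
      by (intro closedin_Int closedin_continuous_map_preimage[OF proj]) (use g Psi_in in auto)
  qed
  moreover have "X = (\<Inter>n. C n)"
  proof
    show "X \<subseteq> (\<Inter>n. C n)"
    proof
      fix x assume x: "x \<in> X"
      have "x \<in> topspace P" unfolding P_def using XV[OF x] by (simp add: PiE_iff)
      then show "x \<in> (\<Inter>n. C n)" unfolding C_def using XPsi[OF x] by simp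
    qed
    show "(\<Inter>n. C n) \<subseteq> X"
    proof
      fix x assume "x \<in> (\<Inter>n. C n)"
      then have "x \<in> topspace P \<and> x n = Psi n (x (Suc n))" for n unfolding C_def by blast
      then have "x n \<in> V n \<and> x n = Psi n (x (Suc n))" for n using tP by blast
      then show "x \<in> X" unfolding cantor_X_def mem_Collect_eq by blast
    qed
  qed
  ultimately show ?thesis unfolding P_def[symmetric] by auto
qed

lemma compact_X: "compactin (X_top V Psi) X"
proof -
  have "compact_space (product_topology (\<lambda>n. discrete_topology (V n)) UNIV)"
    by (simp add: compact_space_product_topology compact_space_discrete_topology finV)
  then have "compactin (product_topology (\<lambda>n. discrete_topology (V n)) UNIV) X"
    by (rule closedin_compact_space[OF _ closedX])
  then show ?thesis unfolding X_top_def by (simp add: compactin_subtopology)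
qed

lemma phiL_fst_cont: "continuous_map (prod_topology (X_top V Psi) euclideanreal) euclideanreal (\<lambda>p. phiL n (fst p n))"
proof -
  have "continuous_map (X_top V Psi) euclideanreal (\<lambda>x. phiL n (x n))" by (rule cyl_cont) simp
  then show ?thesis using continuous_map_compose[OF continuous_map_fst] by (simp add: o_def)
qed
lemma phiU_fst_cont: "continuous_map (prod_topology (X_top V Psi) euclideanreal) euclideanreal (\<lambda>p. phiU n (fst p n))"
proof -
  have "continuous_map (X_top V Psi) euclideanreal (\<lambda>x. phiU n (x n))" by (rule cyl_cont) simp
  then show ?thesis using continuous_map_compose[OF continuous_map_fst] by (simp add: o_def)
qed

lemma closed_fence: "closedin (prod_topology (X_top V Psi) euclideanreal) (fence V Psi phiL phiU)"
proof -
  define Q where "Q = prod_topology (X_top V Psi) euclideanreal"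
  define D where "D n = {p \<in> topspace Q. snd p - phiL n (fst p n) \<in> {0..}} \<inter> {p \<in> topspace Q. phiU n (fst p n) - snd p \<in> {0..}}" for n
  have "closedin Q (D n)" for n
  proof -
    have c1: "continuous_map Q euclideanreal (\<lambda>p. snd p - phiL n (fst p n))"
      unfolding Q_def by (intro continuous_map_diff continuous_map_snd phiL_fst_cont)
    have c2: "continuous_map Q euclideanreal (\<lambda>p. phiU n (fst p n) - snd p)"
      unfolding Q_def by (intro continuous_map_diff continuous_map_snd phiU_fst_cont)
    have cl: "closedin euclideanreal {0..}" by (simp add: closed_closedin[symmetric])
    show ?thesis unfolding D_def
      by (rule closedin_Int[OF closedin_continuous_map_preimage[OF c1 cl] closedin_continuous_map_preimage[OF c2 cl]])
  qed
  moreover have "fence V Psi phiL phiU = (\<Inter>n. D n)"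
    unfolding D_def Q_def by (auto simp: topX fence_iff)
  ultimately show ?thesis unfolding Q_def[symmetric] by auto
qed

lemma compact_fence: "compact_space (fence_top V Psi phiL phiU)"
proof -
  have "compactin (prod_topology (X_top V Psi) euclideanreal) (X \<times> {0..1})"
    using compact_X by (simp add: compactin_Times)
  moreover have "fence V Psi phiL phiU \<subseteq> X \<times> {0..1}"
  proof
    fix p assume "p \<in> fence V Psi phiL phiU"
    moreover obtain x t where "p = (x, t)" by (cases p)
    ultimately have "(x, t) \<in> fence V Psi phiL phiU" and "p = (x, t)" by auto
    then have x: "x \<in> X" and "phiL 0 (x 0) \<le> t" "t \<le> phiU 0 (x 0)" using fence_iff by blast+
    moreover have "0 \<le> phiL 0 (x 0)" "phiU 0 (x 0) \<le> 1" using phi_bds[OF XV[OF x]] by auto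
    ultimately show "p \<in> X \<times> {0..1}" using \<open>p = (x, t)\<close> by auto
  qed
  ultimately have "compactin (prod_topology (X_top V Psi) euclideanreal) (fence V Psi phiL phiU)"
    using closed_fence by (rule closed_compactin)
  then show ?thesis unfolding fence_top_def by (rule compact_space_subtopology)
qed

lemma Hausdorff_fence: "Hausdorff_space (fence_top V Psi phiL phiU)"
proof -
  have "Hausdorff_space (X_top V Psi)"
    unfolding X_top_def by (intro Hausdorff_space_subtopology) (simp add: Hausdorff_space_product_topology)
  then show ?thesis unfolding fence_top_def
    by (intro Hausdorff_space_subtopology) (simp add: Hausdorff_space_prod_topology)
qed

abbreviation "Gp \<equiv> Gamma_plus E Psi phiL phiU"
definition "ra k x z = s_n phiL phiU k (H x k) (x k) z"

lemma Gp_nonneg: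
  assumes x: "x \<in> X" shows "0 \<le> Gp n"
proof -
  have ys: "H x (Suc n) \<in> V (Suc n)" using XV[OF H_X[OF x]] .
  have "\<bar>s_n phiL phiU n (H x n) (x n) (phiL (Suc n) (H x (Suc n)))
         - s_n phiL phiU (Suc n) (H x (Suc n)) (x (Suc n)) (phiL (Suc n) (H x (Suc n)))\<bar> \<le> Gp n"
    by (rule Gamma_plus_bound[OF H_E[OF x] H_E[OF x] XPsi[OF x] XPsi[OF H_X[OF x]]])
       (use phi_bds[OF ys] in auto)
  then show ?thesis by linarith
qed

lemma ra_tele:
  assumes gp: "summable Gp" and x: "x \<in> X" and km: "k \<le> m"
    and z: "phiL m (H x m) \<le> z" "z \<le> phiU m (H x m)"
  shows "\<bar>ra k x z - ra m x z\<bar> \<le> (\<Sum>j. Gp (j + k))"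
proof -
  have hx: "H x \<in> X" by (rule H_X[OF x])
  have "\<bar>ra k x z - ra m x z\<bar> \<le> sum Gp {k..<m}"
  proof (rule telescope[where lo = "\<lambda>n. phiL n (H x n)" and hi = "\<lambda>n. phiU n (H x n)", OF _ _ _ km z])
    show "phiL n (H x n) \<le> phiL (Suc n) (H x (Suc n))" for n using L_inc[OF hx] by (simp add: incseq_Suc_iff)
    show "phiU (Suc n) (H x (Suc n)) \<le> phiU n (H x n)" for n using U_dec[OF hx] by (simp add: decseq_Suc_iff)
    show "\<bar>ra n x t - ra (Suc n) x t\<bar> \<le> Gp n"
      if "phiL (Suc n) (H x (Suc n)) \<le> t" "t \<le> phiU (Suc n) (H x (Suc n))" for n t
      unfolding ra_def
      by (rule Gamma_plus_bound[OF H_E[OF x] H_E[OF x] XPsi[OF x] XPsi[OF hx] that])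
  qed
  also have "\<dots> \<le> (\<Sum>j. Gp (j + k))" by (rule tail_le[OF gp Gp_nonneg[OF x] km])
  finally show ?thesis .
qed

lemma ra_sa: assumes x: "x \<in> X" shows "ra m x (sa m x t) = t"
proof -
  have 1: "phiU m (x m) - phiL m (x m) \<noteq> 0" using strict[OF XV[OF x, of m]] by linarith
  have 2: "phiU m (H x m) - phiL m (H x m) \<noteq> 0" using strict[OF XV[OF H_X[OF x], of m]] by linarith
  show ?thesis unfolding ra_def sa_def s_n_def by (rule aff_inv[OF 1 2])
qed

lemma ra_tendsto: "f \<longlonglongrightarrow> l \<Longrightarrow> (\<lambda>m. ra k x (f m)) \<longlonglongrightarrow> ra k x l"
  unfolding ra_def s_n_def by (intro tendsto_intros)

lemma sl_inj:
  assumes gp: "summable Gp" and p1: "(x, t1) \<in> fence V Psi phiL phiU" and p2: "(x, t2) \<in> fence V Psi phiL phiU"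
    and eq: "sl x t1 = sl x t2"
  shows "t1 = t2"
proof -
  have x: "x \<in> X" using p1 fence_iff by blast
  define Rp where "Rp k = (\<Sum>j. Gp (j + k))" for k
  have key: "\<bar>ra k x (sl x t) - t\<bar> \<le> Rp k" if p: "(x, t) \<in> fence V Psi phiL phiU" for t k
  proof -
    have tt: "\<And>n. phiL n (x n) \<le> t \<and> t \<le> phiU n (x n)" using p fence_iff by blast
    have lim: "(\<lambda>m. \<bar>ra k x (sa m x t) - t\<bar>) \<longlonglongrightarrow> \<bar>ra k x (sl x t) - t\<bar>"
      by (intro tendsto_intros ra_tendsto sa_conv(1)[OF p])
    have le: "\<bar>ra k x (sa m x t) - t\<bar> \<le> Rp k" if "m \<ge> k" for m
    proof -
      have "phiL m (H x m) \<le> sa m x t \<and> sa m x t \<le> phiU m (H x m)"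
        using sa_range[OF x order_refl] tt by blast
      then have "\<bar>ra k x (sa m x t) - ra m x (sa m x t)\<bar> \<le> Rp k"
        unfolding Rp_def using ra_tele[OF gp x that] by blast
      then show ?thesis using ra_sa[OF x] by simp
    qed
    show ?thesis by (rule LIMSEQ_le_const2[OF lim]) (use le in auto)
  qed
  have "\<bar>t1 - t2\<bar> \<le> 2 * Rp k" for k
  proof -
    have "\<bar>ra k x (sl x t1) - t2\<bar> \<le> Rp k" using key[OF p2, of k] eq by simp
    then show ?thesis using key[OF p1, of k] by linarith
  qed
  moreover have "(\<lambda>k. 2 * Rp k) \<longlonglongrightarrow> 0" unfolding Rp_def using tail_lim[OF gp] tendsto_mult_right_zero by blast
  ultimately have "\<bar>t1 - t2\<bar> \<le> 0" by (intro LIMSEQ_le_const[of "\<lambda>k. 2 * Rp k"]) auto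
  then show ?thesis by simp
qed

end

theorem theorem8p1:
  fixes V :: "nat \<Rightarrow> 'a set" and E :: "nat \<Rightarrow> ('a \<times> 'a) set"
    and Psi :: "nat \<Rightarrow> 'a \<Rightarrow> 'a" and phiL phiU :: "nat \<Rightarrow> 'a \<Rightarrow> real"
  assumes sys: "F_system V E Psi phiL phiU"
    and strict: "\<And>n v. v \<in> V n \<Longrightarrow> phiL n v < phiU n v"
    and gam: "condition_Gamma E Psi phiL phiU"
  defines "T \<equiv> (\<lambda>(x, t). (H_X V E Psi x, s_lim V E Psi phiL phiU x t))"
  shows "(\<forall>(x, t) \<in> fence V Psi phiL phiU.
            (\<lambda>n. s_n phiL phiU n (x n) (H_X V E Psi x n) t) \<longlonglongrightarrow> s_lim V E Psi phiL phiU x t)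
    \<and> T ` fence V Psi phiL phiU = fence V Psi phiL phiU
    \<and> continuous_map (fence_top V Psi phiL phiU) (fence_top V Psi phiL phiU) T
    \<and> (\<forall>p \<in> fence V Psi phiL phiU. fst (T p) = H_X V E Psi (fst p))
    \<and> ((condition_Gamma_plus E Psi phiL phiU
         \<and> homeomorphic_map (X_top V Psi) (X_top V Psi) (H_X V E Psi))
        \<longrightarrow> homeomorphic_map (fence_top V Psi phiL phiU) (fence_top V Psi phiL phiU) T)"
proof -
  interpret fsysG V E Psi phiL phiU using sys strict gam by unfold_locales
  have Tx: "T p = (H (fst p), sl (fst p) (snd p))" for p unfolding T_def by (simp add: case_prod_beta')
  have c1: "\<forall>(x, t) \<in> fence V Psi phiL phiU.
            (\<lambda>n. s_n phiL phiU n (x n) (H_X V E Psi x n) t) \<longlonglongrightarrow> s_lim V E Psi phiL phiU x t"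
    using sa_conv(1) unfolding sa_def by blast
  have c2: "T ` fence V Psi phiL phiU = fence V Psi phiL phiU"
  proof
    show "T ` fence V Psi phiL phiU \<subseteq> fence V Psi phiL phiU"
      using T_in by (auto simp: Tx)
    show "fence V Psi phiL phiU \<subseteq> T ` fence V Psi phiL phiU"
    proof
      fix p assume p: "p \<in> fence V Psi phiL phiU"
      obtain y t' where pyt: "p = (y, t')" by (cases p)
      obtain x t where xt: "(x, t) \<in> fence V Psi phiL phiU" "H x = y" "sl x t = t'"
        using T_surj p pyt by blast
      have "T (x, t) = p" using xt pyt by (simp add: Tx)
      then show "p \<in> T ` fence V Psi phiL phiU" using xt(1) by force
    qed
  qed
  have c3: "continuous_map (fence_top V Psi phiL phiU) (fence_top V Psi phiL phiU) T"
    unfolding T_def by (rule T_cont)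
  have c4: "\<forall>p \<in> fence V Psi phiL phiU. fst (T p) = H_X V E Psi (fst p)" by (simp add: Tx)
  have c5: "homeomorphic_map (fence_top V Psi phiL phiU) (fence_top V Psi phiL phiU) T"
    if gp: "condition_Gamma_plus E Psi phiL phiU" and hom: "homeomorphic_map (X_top V Psi) (X_top V Psi) (H_X V E Psi)"
  proof -
    have sgp: "summable Gp" using gp unfolding condition_Gamma_plus_def .
    have injH: "inj_on H X" using homeomorphic_imp_injective_map[OF hom] by (simp add: topX)
    have inj: "inj_on T (fence V Psi phiL phiU)"
    proof (rule inj_onI)
      fix p q assume p: "p \<in> fence V Psi phiL phiU" and q: "q \<in> fence V Psi phiL phiU" and e: "T p = T q"
      obtain x1 t1 where p1: "p = (x1, t1)" by (cases p)
      obtain x2 t2 where q1: "q = (x2, t2)" by (cases q)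
      have f1: "(x1, t1) \<in> fence V Psi phiL phiU" and f2: "(x2, t2) \<in> fence V Psi phiL phiU" using p q p1 q1 by auto
      have x1: "x1 \<in> X" and x2: "x2 \<in> X" using f1 f2 fence_iff by blast+
      have "H x1 = H x2" and s: "sl x1 t1 = sl x2 t2" using e p1 q1 by (simp_all add: Tx)
      then have xx: "x1 = x2" using injH x1 x2 by (meson inj_onD)
      then have "t1 = t2" using sl_inj[OF sgp f1] f2 s by simp
      then show "p = q" using xx p1 q1 by simp
    qed
    have cl: "closed_map (fence_top V Psi phiL phiU) (fence_top V Psi phiL phiU) T"
      by (rule T1_Spaces.continuous_imp_closed_map[OF c3 compact_fence Hausdorff_fence])
    show ?thesis
      by (rule bijective_closed_imp_homeomorphic_map[OF c3 cl]) (use c2 inj in \<open>simp_all add: top_fence\<close>)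
  qed
  show ?thesis using c1 c2 c3 c4 c5 by blast
qed

end
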